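(* Let $G$ be a finite simple chordal graph. The following are equivalent: (i) $\gamma(G)=\alpha(G)$; (ii) $G$ is well-covered; (iii) $G$ is well-dominated; (iv) $V(G)$ is the disjoint union of maximal cliques of $G$ each of which contains a free vertex.
   Context: A dominating set of $G$ is a set $D\subseteq V(G)$ such that every vertex lies in $D$ or is adjacent to a vertex of $D$; $\gamma(G)$ is the minimum size of a dominating set, and $G$ is well-dominated if all minimal (under inclusion) dominating sets have the same size. $\alpha(G)$ is the maximum size of an independent set; $G$ is well-covered if all maximal independent sets have the same size. A clique is a set of pairwise adjacent vertices; a free vertex is a vertex belonging to exactly one maximal clique. A graph is chordal if every cycle of length at least $4$ has a chord. *)

theory Defs
  imports Main
begin

definition simple_graph :: "'a set \<Rightarrow> ('a \<Rightarrow> 'a \<Rightarrow> bool) \<Rightarrow> bool" where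
  "simple_graph V E \<longleftrightarrow> finite V \<and> (\<forall>u v. E u v \<longrightarrow> u \<in> V \<and> v \<in> V)
     \<and> (\<forall>u v. E u v \<longrightarrow> E v u) \<and> (\<forall>v. \<not> E v v)"

definition dominating_set :: "'a set \<Rightarrow> ('a \<Rightarrow> 'a \<Rightarrow> bool) \<Rightarrow> 'a set \<Rightarrow> bool" where
  "dominating_set V E D \<longleftrightarrow> D \<subseteq> V \<and> (\<forall>v\<in>V. v \<in> D \<or> (\<exists>u\<in>D. E v u))"

definition minimal_dominating_set :: "'a set \<Rightarrow> ('a \<Rightarrow> 'a \<Rightarrow> bool) \<Rightarrow> 'a set \<Rightarrow> bool" where
  "minimal_dominating_set V E D \<longleftrightarrow> dominating_set V E D
     \<and> (\<forall>D'. D' \<subset> D \<longrightarrow> \<not> dominating_set V E D')"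

definition domination_number :: "'a set \<Rightarrow> ('a \<Rightarrow> 'a \<Rightarrow> bool) \<Rightarrow> nat" where
  "domination_number V E = Min (card ` {D. dominating_set V E D})"

definition well_dominated :: "'a set \<Rightarrow> ('a \<Rightarrow> 'a \<Rightarrow> bool) \<Rightarrow> bool" where
  "well_dominated V E \<longleftrightarrow> (\<forall>D1 D2. minimal_dominating_set V E D1 \<longrightarrow>
      minimal_dominating_set V E D2 \<longrightarrow> card D1 = card D2)"

definition independent_set :: "'a set \<Rightarrow> ('a \<Rightarrow> 'a \<Rightarrow> bool) \<Rightarrow> 'a set \<Rightarrow> bool" where
  "independent_set V E S \<longleftrightarrow> S \<subseteq> V \<and> (\<forall>u\<in>S. \<forall>v\<in>S. \<not> E u v)"

definition maximal_independent_set :: "'a set \<Rightarrow> ('a \<Rightarrow> 'a \<Rightarrow> bool) \<Rightarrow> 'a set \<Rightarrow> bool" where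
  "maximal_independent_set V E S \<longleftrightarrow> independent_set V E S
     \<and> (\<forall>S'. S \<subset> S' \<longrightarrow> \<not> independent_set V E S')"

definition independence_number :: "'a set \<Rightarrow> ('a \<Rightarrow> 'a \<Rightarrow> bool) \<Rightarrow> nat" where
  "independence_number V E = Max (card ` {S. independent_set V E S})"

definition well_covered :: "'a set \<Rightarrow> ('a \<Rightarrow> 'a \<Rightarrow> bool) \<Rightarrow> bool" where
  "well_covered V E \<longleftrightarrow> (\<forall>S1 S2. maximal_independent_set V E S1 \<longrightarrow>
      maximal_independent_set V E S2 \<longrightarrow> card S1 = card S2)"

definition clique :: "'a set \<Rightarrow> ('a \<Rightarrow> 'a \<Rightarrow> bool) \<Rightarrow> 'a set \<Rightarrow> bool" where
  "clique V E K \<longleftrightarrow> K \<subseteq> V \<and> (\<forall>u\<in>K. \<forall>v\<in>K. u \<noteq> v \<longrightarrow> E u v)"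

definition maximal_clique :: "'a set \<Rightarrow> ('a \<Rightarrow> 'a \<Rightarrow> bool) \<Rightarrow> 'a set \<Rightarrow> bool" where
  "maximal_clique V E K \<longleftrightarrow> clique V E K \<and> (\<forall>K'. K \<subset> K' \<longrightarrow> \<not> clique V E K')"

definition free_vertex :: "'a set \<Rightarrow> ('a \<Rightarrow> 'a \<Rightarrow> bool) \<Rightarrow> 'a \<Rightarrow> bool" where
  "free_vertex V E v \<longleftrightarrow> v \<in> V \<and> (\<exists>!K. maximal_clique V E K \<and> v \<in> K)"

definition is_cycle :: "'a set \<Rightarrow> ('a \<Rightarrow> 'a \<Rightarrow> bool) \<Rightarrow> 'a list \<Rightarrow> bool" where
  "is_cycle V E cs \<longleftrightarrow> length cs \<ge> 3 \<and> distinct cs \<and> set cs \<subseteq> V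
     \<and> (\<forall>i < length cs. E (cs ! i) (cs ! ((i + 1) mod length cs)))"

definition has_chord :: "('a \<Rightarrow> 'a \<Rightarrow> bool) \<Rightarrow> 'a list \<Rightarrow> bool" where
  "has_chord E cs \<longleftrightarrow> (\<exists>i < length cs. \<exists>j < length cs.
      j \<noteq> (i + 1) mod length cs \<and> i \<noteq> (j + 1) mod length cs \<and> i \<noteq> j
      \<and> E (cs ! i) (cs ! j))"

definition chordal :: "'a set \<Rightarrow> ('a \<Rightarrow> 'a \<Rightarrow> bool) \<Rightarrow> bool" where
  "chordal V E \<longleftrightarrow> (\<forall>cs. is_cycle V E cs \<and> length cs \<ge> 4 \<longrightarrow> has_chord E cs)"

end

theory Submission
  imports Defs
begin


definition restr :: "'a set \<Rightarrow> ('a \<Rightarrow> 'a \<Rightarrow> bool) \<Rightarrow> 'a \<Rightarrow> 'a \<Rightarrow> bool" where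
  "restr W E = (\<lambda>x y. E x y \<and> x \<in> W \<and> y \<in> W)"

lemma simple_restr:
  assumes "simple_graph V E" "W \<subseteq> V" shows "simple_graph W (restr W E)"
  using assms finite_subset unfolding simple_graph_def restr_def by blast

lemma chordal_restr:
  assumes "simple_graph V E" "chordal V E" "W \<subseteq> V" shows "chordal W (restr W E)"
  unfolding chordal_def
proof (intro allI impI)
  fix cs assume a: "is_cycle W (restr W E) cs \<and> 4 \<le> length cs"
  then have "is_cycle V E cs" using assms(3) unfolding is_cycle_def restr_def by auto
  then have "has_chord E cs" using a assms(2) unfolding chordal_def by blast
  moreover have "set cs \<subseteq> W" using a unfolding is_cycle_def by auto
  ultimately show "has_chord (restr W E) cs" unfolding has_chord_def restr_def
    by (metis nth_mem subsetD)
qed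

fun walk :: "('a \<Rightarrow> 'a \<Rightarrow> bool) \<Rightarrow> 'a list \<Rightarrow> bool" where
  "walk E (x # y # xs) = (E x y \<and> walk E (y # xs))"
| "walk E _ = True"

lemma walk_Cons: "walk E (x # xs) \<longleftrightarrow> walk E xs \<and> (xs \<noteq> [] \<longrightarrow> E x (hd xs))"
  by (cases xs) auto

lemma walk_append:
  "walk E (xs @ ys) \<longleftrightarrow> walk E xs \<and> walk E ys \<and> (xs \<noteq> [] \<longrightarrow> ys \<noteq> [] \<longrightarrow> E (last xs) (hd ys))"
  by (induction xs) (auto simp: walk_Cons)

lemma walk_nth: "walk E xs \<Longrightarrow> Suc i < length xs \<Longrightarrow> E (xs ! i) (xs ! Suc i)"
proof (induction xs arbitrary: i)
  case Nil then show ?case by simp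
next
  case (Cons x xs)
  then show ?case by (cases i) (auto simp: walk_Cons hd_conv_nth)
qed

lemma walk_take: "walk E xs \<Longrightarrow> walk E (take k xs)"
  using walk_append[of E "take k xs" "drop k xs"] by simp

lemma walk_drop: "walk E xs \<Longrightarrow> walk E (drop k xs)"
  using walk_append[of E "take k xs" "drop k xs"] by simp

lemma walk_rev: "(\<forall>u v. E u v \<longrightarrow> E v u) \<Longrightarrow> walk E xs \<Longrightarrow> walk E (rev xs)"
  by (induction xs) (auto simp: walk_append walk_Cons last_rev)

lemma walk_shortcut:
  assumes "walk E xs" "k \<le> j" "j < length xs" "k = 0 \<or> E (xs ! (k - 1)) (xs ! j)"
  shows "walk E (take k xs @ drop j xs)"
proof -
  have "take k xs \<noteq> [] \<Longrightarrow> last (take k xs) = xs ! (k - 1)"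
    using assms by (simp add: last_conv_nth min_def)
  moreover have "hd (drop j xs) = xs ! j" using assms by (simp add: hd_drop_conv_nth)
  ultimately show ?thesis using assms walk_take walk_drop
    by (auto simp: walk_append)
qed

lemma sym_E: "simple_graph V E \<Longrightarrow> E a b \<Longrightarrow> E b a"
  unfolding simple_graph_def by blast

lemma irr_E: "simple_graph V E \<Longrightarrow> \<not> E a a"
  unfolding simple_graph_def by blast

lemma induced_path_cycle:
  assumes sg: "simple_graph V E" and ch: "chordal V E" and u: "u \<in> V"
    and w: "walk E xs" and d: "distinct xs" and l: "length xs \<ge> 3" and sx: "set xs \<subseteq> V"
    and un: "u \<notin> set xs" and uh: "E u (hd xs)" and ul: "E u (last xs)"
    and ind: "\<forall>i j. i < j \<longrightarrow> j < length xs \<longrightarrow> E (xs!i) (xs!j) \<longrightarrow> j = Suc i"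
    and nu: "\<forall>k. 0 < k \<longrightarrow> k < length xs - 1 \<longrightarrow> \<not> E u (xs!k)"
  shows False
proof -
  define n where "n = length xs"
  let ?cs = "u # xs"
  have ne: "xs \<noteq> []" using l by auto
  have cyc: "is_cycle V E ?cs"
    unfolding is_cycle_def
  proof (intro conjI allI impI)
    show "3 \<le> length ?cs" using l by simp
    show "distinct ?cs" using d un by simp
    show "set ?cs \<subseteq> V" using sx u by simp
    fix i assume i: "i < length ?cs"
    show "E (?cs ! i) (?cs ! ((i + 1) mod length ?cs))"
    proof (cases "i = 0")
      case True
      then show ?thesis using uh ne by (simp add: hd_conv_nth)
    next
      case False
      show ?thesis
      proof (cases "i = n")
        case True
        then have "?cs ! i = last xs" using ne False by (simp add: last_conv_nth n_def)
        then show ?thesis using True ul sym_E[OF sg] by (simp add: n_def)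
      next
        case False2: False
        then have "i < n" using i n_def by simp
        then have "(i + 1) mod length ?cs = Suc i" by (simp add: n_def)
        moreover have "E (xs ! (i - 1)) (xs ! Suc (i - 1))"
          using walk_nth[OF w, of "i - 1"] \<open>i < n\<close> False n_def by simp
        ultimately show ?thesis using False by (cases i) auto
      qed
    qed
  qed
  have claim: "\<not> E (?cs ! i) (?cs ! j)"
    if ij: "i < j" "j < Suc n" "j \<noteq> (i + 1) mod Suc n" "i \<noteq> (j + 1) mod Suc n" for i j
  proof -
    have "(i + 1) mod Suc n = i + 1" using ij by simp
    then have j2: "j \<ge> i + 2" using ij by simp
    show ?thesis
    proof (cases "i = 0")
      case True
      have "j \<noteq> n" using ij True by auto
      then have "0 < j - 1" "j - 1 < length xs - 1" using j2 ij True n_def by auto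
      then have "\<not> E u (xs ! (j - 1))" using nu by blast
      then show ?thesis using True j2 by (cases j) auto
    next
      case False
      have "i - 1 < j - 1" "j - 1 < length xs" using False ij n_def by auto
      moreover have "j - 1 \<noteq> Suc (i - 1)" using j2 False by simp
      ultimately have "\<not> E (xs ! (i - 1)) (xs ! (j - 1))" using ind by blast
      then show ?thesis using False j2 by (cases i; cases j) auto
    qed
  qed
  have "has_chord E ?cs" using ch cyc l unfolding chordal_def by simp
  then obtain i j where ij: "i < Suc n" "j < Suc n" "j \<noteq> (i + 1) mod Suc n"
    "i \<noteq> (j + 1) mod Suc n" "i \<noteq> j" "E (?cs ! i) (?cs ! j)"
    unfolding has_chord_def n_def by auto
  show False
  proof (cases "i < j")
    case True then show ?thesis using claim[of i j] ij by simp
  next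
    case False
    then have "j < i" using ij by simp
    then show ?thesis using claim[of j i] ij(1-5) sym_E[OF sg, OF ij(6)] by simp
  qed
qed


lemma sep_clique:
  assumes sg: "simple_graph V E" and ch: "chordal V E" and u: "u \<in> V"
    and CV: "C \<subseteq> V" and uC: "\<forall>c\<in>C. \<not> E u c" "u \<notin> C"
    and ys: "walk E ys" "ys \<noteq> []" "hd ys = cs" "last ys = ct" "set ys \<subseteq> C"
    and st: "s \<in> V" "t \<in> V" "s \<notin> C" "t \<notin> C" "s \<noteq> t" "E u s" "E u t"
    and cs: "E s cs" and ct: "E t ct"
  shows "E s t"
proof (rule ccontr)
  assume nst: "\<not> E s t"
  define P where "P xs \<longleftrightarrow> walk E xs \<and> xs \<noteq> [] \<and> hd xs = s \<and> last xs = t \<and> set xs \<subseteq> C \<union> {s, t}" for xs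
  have "P (s # ys @ [t])" unfolding P_def using ys cs ct sym_E[OF sg]
    by (auto simp: walk_Cons walk_append)
  then obtain xs where Pxs: "P xs" and min: "\<And>zs. P zs \<Longrightarrow> length xs \<le> length zs"
    using ex_has_least_nat[of P _ length] by metis
  have w: "walk E xs" and ne: "xs \<noteq> []" and hx: "hd xs = s" and lx: "last xs = t"
    and sx: "set xs \<subseteq> C \<union> {s, t}" using Pxs unfolding P_def by auto
  have x0: "xs ! 0 = s" using hx ne by (simp add: hd_conv_nth)
  have xl: "xs ! (length xs - 1) = t" using lx ne by (simp add: last_conv_nth)
  have dist: "distinct xs"
  proof (rule ccontr)
    assume "\<not> distinct xs"
    then obtain i j where ij: "i < j" "j < length xs" "xs ! i = xs ! j"
      unfolding distinct_conv_nth by (metis linorder_neqE_nat)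
    define zs where "zs = take i xs @ drop j xs"
    have "i = 0 \<or> E (xs ! (i - 1)) (xs ! j)"
      using walk_nth[OF w, of "i - 1"] ij by (cases i) auto
    then have wz: "walk E zs" using walk_shortcut[OF w, of i j] ij unfolding zs_def by simp
    have hz: "hd zs = s"
    proof (cases "i = 0")
      case True then show ?thesis using ij x0 by (simp add: zs_def hd_drop_conv_nth)
    next
      case False then show ?thesis using ij x0 by (simp add: zs_def hd_conv_nth nth_append)
    qed
    have "P zs" unfolding P_def zs_def using wz hz ij lx sx set_take_subset[of i xs] set_drop_subset[of j xs]
      by (auto simp: zs_def)
    moreover have "length zs < length xs" using ij by (simp add: zs_def)
    ultimately show False using min by fastforce
  qed
  have ind: "\<forall>i j. i < j \<longrightarrow> j < length xs \<longrightarrow> E (xs!i) (xs!j) \<longrightarrow> j = Suc i"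
  proof (intro allI impI, rule ccontr)
    fix i j assume ij: "i < j" "j < length xs" "E (xs!i) (xs!j)" "j \<noteq> Suc i"
    define zs where "zs = take (Suc i) xs @ drop j xs"
    have wz: "walk E zs" using walk_shortcut[OF w, of "Suc i" j] ij unfolding zs_def by simp
    have hz: "hd zs = s" using ij x0 by (simp add: zs_def hd_conv_nth nth_append)
    have "P zs" unfolding P_def zs_def using wz hz ij lx sx set_take_subset[of "Suc i" xs] set_drop_subset[of j xs]
      by (auto simp: zs_def)
    moreover have "length zs < length xs" using ij by (simp add: zs_def)
    ultimately show False using min by fastforce
  qed
  have l3: "length xs \<ge> 3"
  proof (rule ccontr)
    assume "\<not> 3 \<le> length xs"
    moreover have "length xs \<noteq> 0" using ne by simp
    ultimately have "length xs = 1 \<or> length xs = 2" by linarith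
    then show False
    proof
      assume "length xs = 1" then show False using x0 xl st by simp
    next
      assume "length xs = 2" then show False using x0 xl nst walk_nth[OF w, of 0] by simp
    qed
  qed
  have interior: "xs ! k \<in> C" if "0 < k" "k < length xs - 1" for k
  proof -
    have mem: "xs ! k \<in> C \<union> {s, t}" using sx that by (meson diff_le_self nth_mem order_less_le_trans subsetD)
    have kl: "k < length xs" "0 < length xs" "length xs - 1 < length xs" using that l3 by auto
    moreover have "xs ! k \<noteq> xs ! 0" "xs ! k \<noteq> xs ! (length xs - 1)"
      using nth_eq_iff_index_eq[OF dist kl(1) kl(2)] nth_eq_iff_index_eq[OF dist kl(1) kl(3)] that by auto
    ultimately show ?thesis using x0 xl mem by auto
  qed
  have un: "u \<notin> set xs" using sx uC st irr_E[OF sg] by auto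
  have sV: "set xs \<subseteq> V" using sx CV st by auto
  have nu: "\<forall>k. 0 < k \<longrightarrow> k < length xs - 1 \<longrightarrow> \<not> E u (xs!k)" using interior uC by blast
  have uh: "E u (hd xs)" "E u (last xs)" using hx lx st by auto
  show False by (rule induced_path_cycle[OF sg ch u w dist l3 sV un uh ind nu])
qed


definition simplicial :: "('a \<Rightarrow> 'a \<Rightarrow> bool) \<Rightarrow> 'a \<Rightarrow> bool" where
  "simplicial E v \<longleftrightarrow> (\<forall>a b. E v a \<longrightarrow> E v b \<longrightarrow> a \<noteq> b \<longrightarrow> E a b)"

lemma simplicial_lift:
  assumes "simplicial (restr H E) z" "z \<in> H" "\<forall>x. E z x \<longrightarrow> x \<in> H"
  shows "simplicial E z"
  using assms unfolding simplicial_def restr_def by blast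

lemma simplicial_far:
  "simple_graph V E \<Longrightarrow> chordal V E \<Longrightarrow> u \<in> V \<Longrightarrow> w \<in> V \<Longrightarrow> w \<noteq> u \<Longrightarrow> \<not> E u w
   \<Longrightarrow> \<exists>z\<in>V. z \<noteq> u \<and> \<not> E u z \<and> simplicial E z"
proof (induction "card V" arbitrary: V E u w rule: less_induct)
  case less
  note sg = less.prems(1) and ch = less.prems(2)
  have sym: "\<And>a b. E a b \<Longrightarrow> E b a" using sym_E[OF sg] by blast
  have inV: "\<And>a b. E a b \<Longrightarrow> a \<in> V \<and> b \<in> V" using sg unfolding simple_graph_def by blast
  define W where "W = {x\<in>V. x \<noteq> u \<and> \<not> E u x}"
  have wW: "w \<in> W" using less.prems unfolding W_def by auto
  define C where "C = {d. \<exists>xs. walk E xs \<and> xs \<noteq> [] \<and> hd xs = w \<and> last xs = d \<and> set xs \<subseteq> W}"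
  have CW: "C \<subseteq> W" unfolding C_def by auto
  have wC: "w \<in> C" unfolding C_def using wW by (intro CollectI exI[of _ "[w]"]) auto
  have clos: "d \<in> C" if h: "c \<in> C" "d \<in> W" "E c d" for c d
  proof -
    obtain xs where xs: "walk E xs" "xs \<noteq> []" "hd xs = w" "last xs = c" "set xs \<subseteq> W"
      using h(1) unfolding C_def by blast
    then show ?thesis unfolding C_def using h
      by (intro CollectI exI[of _ "xs @ [d]"]) (auto simp: walk_append)
  qed
  have conn: "\<exists>ys. walk E ys \<and> ys \<noteq> [] \<and> hd ys = c \<and> last ys = d \<and> set ys \<subseteq> W"
    if h: "c \<in> C" "d \<in> C" for c d
  proof -
    obtain xs where xs: "walk E xs" "xs \<noteq> []" "hd xs = w" "last xs = c" "set xs \<subseteq> W"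
      using h(1) unfolding C_def by blast
    obtain zs where zs: "walk E zs" "zs \<noteq> []" "hd zs = w" "last zs = d" "set zs \<subseteq> W"
      using h(2) unfolding C_def by blast
    have wr: "walk E (rev xs)" using walk_rev[OF _ xs(1)] sym by blast
    have wt: "walk E (tl zs)" using walk_drop[OF zs(1), of 1] by (simp add: drop_Suc)
    have e: "tl zs \<noteq> [] \<Longrightarrow> E w (hd (tl zs))"
      using zs(1,2,3) by (cases zs rule: remdups_adj.cases) auto
    show ?thesis
    proof (intro exI[of _ "rev xs @ tl zs"] conjI)
      show "walk E (rev xs @ tl zs)" using wr wt e xs by (auto simp: walk_append last_rev)
      show "rev xs @ tl zs \<noteq> []" using xs by simp
      show "hd (rev xs @ tl zs) = c" using xs by (simp add: hd_rev)
      show "last (rev xs @ tl zs) = d"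
      proof (cases "tl zs = []")
        case True
        then have "zs = [w]" using zs by (cases zs) auto
        then show ?thesis using zs xs True by (simp add: last_rev)
      next
        case False
        then show ?thesis using zs by (cases zs) auto
      qed
      show "set (rev xs @ tl zs) \<subseteq> W" using xs zs by (auto dest: list.set_sel(2))
    qed
  qed
  define S where "S = {s\<in>V. s \<notin> C \<and> (\<exists>c\<in>C. E s c)}"
  have Su: "E u s" if h: "s \<in> S" for s
  proof -
    obtain c where c: "c \<in> C" "E s c" "s \<in> V" "s \<notin> C" using h unfolding S_def by blast
    have "s \<notin> W" using clos[OF c(1) _ sym[OF c(2)]] c(4) by blast
    moreover have "s \<noteq> u" using c CW unfolding W_def by blast
    ultimately show ?thesis using c(3) unfolding W_def by blast
  qed
  have Scl: "E s t" if h: "s \<in> S" "t \<in> S" "s \<noteq> t" for s t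
  proof -
    obtain cs where cs: "cs \<in> C" "E s cs" "s \<in> V" "s \<notin> C" using h(1) unfolding S_def by blast
    obtain ct where ct: "ct \<in> C" "E t ct" "t \<in> V" "t \<notin> C" using h(2) unfolding S_def by blast
    obtain ys where ys: "walk E ys" "ys \<noteq> []" "hd ys = cs" "last ys = ct" "set ys \<subseteq> W"
      using conn[OF cs(1) ct(1)] by blast
    have sW: "s \<notin> W" "t \<notin> W" using Su[OF h(1)] Su[OF h(2)] unfolding W_def by auto
    have WV: "W \<subseteq> V" "\<forall>c\<in>W. \<not> E u c" "u \<notin> W" unfolding W_def by auto
    show ?thesis
      by (rule sep_clique[OF sg ch less.prems(3) WV ys cs(3) ct(3) sW h(3) Su[OF h(1)] Su[OF h(2)] cs(2) ct(2)])
  qed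
  define H where "H = C \<union> S"
  have HV: "H \<subseteq> V" using CW unfolding H_def S_def W_def by auto
  have uH: "u \<notin> H" using CW Su irr_E[OF sg] unfolding H_def W_def by blast
  have cardH: "card H < card V"
  proof -
    have "finite V" using sg unfolding simple_graph_def by blast
    moreover have "H \<subset> V" using HV uH less.prems(3) by blast
    ultimately show ?thesis by (rule psubset_card_mono)
  qed
  have nbrs: "x \<in> H" if "c \<in> C" "E c x" for c x
  proof (cases "x \<in> C")
    case True then show ?thesis unfolding H_def by blast
  next
    case False then show ?thesis using that inV sym unfolding H_def S_def by blast
  qed
  have zgood: "\<exists>z\<in>V. z \<noteq> u \<and> \<not> E u z \<and> simplicial E z"
    if h: "z \<in> C" "simplicial (restr H E) z" for z
  proof -
    have "simplicial E z"
      using simplicial_lift[OF h(2)] h(1) nbrs unfolding H_def by blast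
    then show ?thesis using h(1) CW unfolding W_def by blast
  qed
  have sgH: "simple_graph H (restr H E)" using simple_restr[OF sg HV] .
  have chH: "chordal H (restr H E)" using chordal_restr[OF sg ch HV] .
  show ?case
  proof (cases "\<forall>a\<in>H. \<forall>b\<in>H. a \<noteq> b \<longrightarrow> E a b")
    case True
    have "simplicial E w" unfolding simplicial_def using True nbrs[OF wC] by blast
    then show ?thesis using wW unfolding W_def by blast
  next
    case notc: False
    show ?thesis
    proof (cases "\<exists>c\<in>C. \<exists>s\<in>S. \<not> E c s")
      case True
      then obtain c s where cs: "c \<in> C" "s \<in> S" "\<not> E c s" by blast
      have "c \<noteq> s" using cs unfolding S_def by blast
      moreover have "\<not> restr H E s c" using cs sym unfolding restr_def by blast
      ultimately obtain z where z: "z \<in> H" "z \<noteq> s" "\<not> restr H E s z" "simplicial (restr H E) z"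
        using less.hyps[OF cardH sgH chH, of s c] cs unfolding H_def by blast
      have "z \<notin> S" using z Scl cs(2) unfolding restr_def H_def by blast
      then have "z \<in> C" using z unfolding H_def by blast
      then show ?thesis using zgood z by blast
    next
      case False
      obtain a b where ab: "a \<in> H" "b \<in> H" "a \<noteq> b" "\<not> E a b" using notc by blast
      have aC: "a \<in> C"
      proof (rule ccontr)
        assume "a \<notin> C"
        then have "a \<in> S" using ab unfolding H_def by blast
        then show False using ab Scl False sym unfolding H_def by blast
      qed
      have "\<not> restr H E a b" using ab unfolding restr_def by blast
      then obtain z where z: "z \<in> H" "z \<noteq> a" "\<not> restr H E a z" "simplicial (restr H E) z"
        using less.hyps[OF cardH sgH chH, of a b] ab by blast
      have "z \<notin> S" using z False aC unfolding restr_def H_def by blast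
      then have "z \<in> C" using z unfolding H_def by blast
      then show ?thesis using zgood z by blast
    qed
  qed
qed


lemma simplicial_exists:
  assumes sg: "simple_graph V E" and ch: "chordal V E" and ne: "V \<noteq> {}"
  shows "\<exists>z\<in>V. simplicial E z"
proof (cases "\<exists>u\<in>V. \<exists>w\<in>V. w \<noteq> u \<and> \<not> E u w")
  case True
  then show ?thesis using simplicial_far[OF sg ch] by blast
next
  case False
  obtain z where "z \<in> V" using ne by blast
  moreover have "simplicial E z" unfolding simplicial_def
  proof (intro allI impI)
    fix a b assume ab: "E z a" "E z b" "a \<noteq> b"
    have "a \<in> V" "b \<in> V" using ab sg unfolding simple_graph_def by auto
    then show "E a b" using False ab(3) by auto
  qed
  ultimately show ?thesis by blast
qed

lemma clique_partition:
  "simple_graph V E \<Longrightarrow> chordal V E \<Longrightarrow> \<exists>\<P> I. finite \<P> \<and> (\<forall>P\<in>\<P>. clique V E P)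
     \<and> (\<forall>P1\<in>\<P>. \<forall>P2\<in>\<P>. P1 \<noteq> P2 \<longrightarrow> P1 \<inter> P2 = {}) \<and> \<Union>\<P> = V
     \<and> independent_set V E I \<and> card I = card \<P>"
proof (induction "card V" arbitrary: V E rule: less_induct)
  case less
  note sg = less.prems(1) and ch = less.prems(2)
  have fin: "finite V" using sg unfolding simple_graph_def by blast
  have inV: "\<And>a b. E a b \<Longrightarrow> a \<in> V \<and> b \<in> V" using sg unfolding simple_graph_def by blast
  show ?case
  proof (cases "V = {}")
    case True
    show ?thesis
      by (rule exI[of _ "{}"], rule exI[of _ "{}"]) (simp add: True independent_set_def)
  next
    case False
    obtain v where v: "v \<in> V" "simplicial E v" using simplicial_exists[OF sg ch False] by blast
    define K where "K = insert v {x. E v x}"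
    have KV: "K \<subseteq> V" using v inV unfolding K_def by blast
    have Kcl: "clique V E K" unfolding clique_def
    proof (intro conjI ballI impI)
      show "K \<subseteq> V" by (rule KV)
      fix a b assume ab: "a \<in> K" "b \<in> K" "a \<noteq> b"
      show "E a b"
      proof (cases "a = v")
        case True then show ?thesis using ab unfolding K_def by auto
      next
        case False
        show ?thesis
        proof (cases "b = v")
          case True then show ?thesis using ab False sym_E[OF sg, of v a] unfolding K_def by auto
        next
          case False2: False
          then show ?thesis using ab False v(2) unfolding K_def simplicial_def by auto
        qed
      qed
    qed
    define V' where "V' = V - K"
    have V'V: "V' \<subseteq> V" unfolding V'_def by (rule Diff_subset)
    have vK: "v \<in> K" unfolding K_def by simp
    have "V' \<subset> V" using v(1) vK unfolding V'_def by auto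
    then have cV: "card V' < card V" by (rule psubset_card_mono[OF fin])
    from less.hyps[OF cV simple_restr[OF sg V'V] chordal_restr[OF sg ch V'V]] obtain \<P>' I' where IH: "finite \<P>'" "\<forall>P\<in>\<P>'. clique V' (restr V' E) P"
      "\<forall>P1\<in>\<P>'. \<forall>P2\<in>\<P>'. P1 \<noteq> P2 \<longrightarrow> P1 \<inter> P2 = {}" "\<Union>\<P>' = V'"
      "independent_set V' (restr V' E) I'" "card I' = card \<P>'"
      by metis
    have PV': "P \<subseteq> V'" if "P \<in> \<P>'" for P using IH(4) that by auto
    have KnP: "K \<notin> \<P>'"
    proof
      assume "K \<in> \<P>'"
      then have "K \<subseteq> V'" by (rule PV')
      then show False using vK unfolding V'_def by auto
    qed
    have I'V: "I' \<subseteq> V'" using IH(5) unfolding independent_set_def by (rule conjunct1)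
    have vI: "v \<notin> I'" using I'V vK unfolding V'_def by auto
    have finI: "finite I'" by (rule finite_subset[OF I'V finite_subset[OF V'V fin]])
    show ?thesis
    proof (rule exI[of _ "insert K \<P>'"], rule exI[of _ "insert v I'"], intro conjI)
      show "finite (insert K \<P>')" using IH(1) by simp
      show "\<forall>P\<in>insert K \<P>'. clique V E P"
        using Kcl IH(2) V'V unfolding clique_def restr_def by blast
      show "\<forall>P1\<in>insert K \<P>'. \<forall>P2\<in>insert K \<P>'. P1 \<noteq> P2 \<longrightarrow> P1 \<inter> P2 = {}"
        using IH(3) PV' unfolding V'_def by blast
      show "\<Union>(insert K \<P>') = V" using IH(4) KV unfolding V'_def by blast
      show "independent_set V E (insert v I')"
        unfolding independent_set_def
      proof (intro conjI ballI)
        show "insert v I' \<subseteq> V" using v I'V V'V by blast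
        fix a b assume ab: "a \<in> insert v I'" "b \<in> insert v I'"
        show "\<not> E a b"
        proof (cases "a = v")
          case True
          then show ?thesis using ab I'V irr_E[OF sg] unfolding V'_def K_def by auto
        next
          case False
          then have aI: "a \<in> I'" using ab by blast
          show ?thesis
          proof (cases "b = v")
            case True
            then show ?thesis using aI I'V sym_E[OF sg] unfolding V'_def K_def by blast
          next
            case False
            then have "b \<in> I'" using ab by blast
            then show ?thesis using aI IH(5) I'V unfolding independent_set_def restr_def by blast
          qed
        qed
      qed
      show "card (insert v I') = card (insert K \<P>')" using IH(1,6) KnP vI finI by simp
    qed
  qed
qed

lemma four_cycle:
  assumes sg: "simple_graph V E" and ch: "chordal V E" and P: "clique V E P"
    and pq: "p \<in> P" "q \<in> P" and ab: "a \<in> V" "b \<in> V" "a \<notin> P" "b \<notin> P"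
    and e: "E a b" "E a p" "\<not> E a q" "E b q" "\<not> E b p"
  shows False
proof -
  have sym: "\<And>x y. E x y \<Longrightarrow> E y x" using sym_E[OF sg] by blast
  have pq': "p \<noteq> q" using e by blast
  have Epq: "E q p" using P pq pq' unfolding clique_def by auto
  have PV: "p \<in> V" "q \<in> V" using P pq unfolding clique_def by auto
  let ?cs = "[p, a, b, q]"
  have cyc: "is_cycle V E ?cs"
    unfolding is_cycle_def
  proof (intro conjI allI impI)
    show "3 \<le> length ?cs" by simp
    show "distinct ?cs" using pq ab pq' irr_E[OF sg, of a] e by auto
    show "set ?cs \<subseteq> V" using PV ab by auto
    fix i assume "i < length ?cs"
    then have "i = 0 \<or> i = 1 \<or> i = 2 \<or> i = 3" by auto
    then show "E (?cs ! i) (?cs ! ((i + 1) mod length ?cs))"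
      using e sym[OF e(2)] Epq by auto
  qed
  have l4: "length ?cs = 4" by simp
  have "has_chord E ?cs" using ch[unfolded chordal_def, rule_format, of ?cs] cyc l4 by simp
  then obtain i j where ij: "i < 4" "j < 4" "j \<noteq> (i + 1) mod 4" "i \<noteq> (j + 1) mod 4" "i \<noteq> j"
    "E (?cs ! i) (?cs ! j)" unfolding has_chord_def l4 by blast
  have "i = 0 \<or> i = 1 \<or> i = 2 \<or> i = 3" "j = 0 \<or> j = 1 \<or> j = 2 \<or> j = 3" using ij by auto
  moreover have "\<not> E p b" "\<not> E q a" using e sym by blast+
  ultimately show False using ij e by auto
qed



lemma max_extend:
  assumes fin: "finite V" and QA: "Q A" and sub: "\<And>S. Q S \<Longrightarrow> S \<subseteq> V"
  shows "\<exists>S. Q S \<and> A \<subseteq> S \<and> (\<forall>T. S \<subset> T \<longrightarrow> \<not> Q T)"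
proof -
  define R where "R S \<longleftrightarrow> Q S \<and> A \<subseteq> S" for S
  have "R A" using QA unfolding R_def by simp
  then obtain S where RS: "R S" and m: "\<And>T. R T \<Longrightarrow> card V - card S \<le> card V - card T"
    using ex_has_least_nat[of R A "\<lambda>S. card V - card S"] by metis
  show ?thesis
  proof (intro exI conjI allI impI)
    show "Q S" "A \<subseteq> S" using RS unfolding R_def by auto
    fix T assume ST: "S \<subset> T"
    show "\<not> Q T"
    proof
      assume QT: "Q T"
      have TV: "T \<subseteq> V" using sub[OF QT] .
      have RT: "R T" using QT ST \<open>A \<subseteq> S\<close> unfolding R_def by auto
      have "finite T" using finite_subset[OF TV fin] .
      then have "card S < card T" using psubset_card_mono ST by blast
      moreover have "card T \<le> card V" using card_mono[OF fin TV] .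
      ultimately have "card V - card T < card V - card S" by linarith
      then show False using m[OF RT] by linarith
    qed
  qed
qed

lemma indep_extend:
  assumes "finite V" "independent_set V E A"
  shows "\<exists>S. maximal_independent_set V E S \<and> A \<subseteq> S"
proof -
  obtain S where S: "independent_set V E S" "A \<subseteq> S" "\<forall>T. S \<subset> T \<longrightarrow> \<not> independent_set V E T"
    using max_extend[of V "independent_set V E" A] assms unfolding independent_set_def by auto
  then show ?thesis unfolding maximal_independent_set_def by auto
qed

lemma clique_extend:
  assumes "finite V" "clique V E A"
  shows "\<exists>S. maximal_clique V E S \<and> A \<subseteq> S"
proof -
  obtain S where S: "clique V E S" "A \<subseteq> S" "\<forall>T. S \<subset> T \<longrightarrow> \<not> clique V E T"
    using max_extend[of V "clique V E" A] assms unfolding clique_def by auto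
  then show ?thesis unfolding maximal_clique_def by auto
qed

lemma mis_dom:
  assumes sg: "simple_graph V E" and S: "maximal_independent_set V E S"
  shows "dominating_set V E S"
  unfolding dominating_set_def
proof (intro conjI ballI)
  have iS: "independent_set V E S" using S unfolding maximal_independent_set_def by auto
  then show "S \<subseteq> V" unfolding independent_set_def by auto
  fix v assume vV: "v \<in> V"
  show "v \<in> S \<or> (\<exists>u\<in>S. E v u)"
  proof (rule ccontr)
    assume "\<not> (v \<in> S \<or> (\<exists>u\<in>S. E v u))"
    then have vS: "v \<notin> S" and nv: "\<forall>u\<in>S. \<not> E v u" by auto
    have "independent_set V E (insert v S)" unfolding independent_set_def
    proof (intro conjI ballI)
      show "insert v S \<subseteq> V" using vV \<open>S \<subseteq> V\<close> by auto
      fix a b assume ab: "a \<in> insert v S" "b \<in> insert v S"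
      show "\<not> E a b"
      proof (cases "a = v")
        case True
        then show ?thesis using ab nv irr_E[OF sg, of v] by auto
      next
        case False
        then have aS: "a \<in> S" using ab by auto
        show ?thesis
        proof (cases "b = v")
          case True
          then show ?thesis using aS nv sym_E[OF sg, of a v] by auto
        next
          case False
          then have "b \<in> S" using ab by auto
          then show ?thesis using aS iS unfolding independent_set_def by auto
        qed
      qed
    qed
    moreover have "S \<subset> insert v S" using vS by auto
    ultimately show False using S unfolding maximal_independent_set_def by auto
  qed
qed

lemma mis_mds:
  assumes sg: "simple_graph V E" and S: "maximal_independent_set V E S"
  shows "minimal_dominating_set V E S"
  unfolding minimal_dominating_set_def
proof (intro conjI allI impI)
  show "dominating_set V E S" by (rule mis_dom[OF sg S])
  have iS: "independent_set V E S" using S unfolding maximal_independent_set_def by auto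
  fix D' assume D': "D' \<subset> S"
  show "\<not> dominating_set V E D'"
  proof
    assume dD: "dominating_set V E D'"
    obtain x where x: "x \<in> S" "x \<notin> D'" using D' by auto
    have "x \<in> V" using x iS unfolding independent_set_def by auto
    then obtain u where "u \<in> D'" "E x u" using dD x(2) unfolding dominating_set_def by auto
    moreover have "u \<in> S" using \<open>u \<in> D'\<close> D' by auto
    ultimately show False using x(1) iS unfolding independent_set_def by auto
  qed
qed

lemma free_nbhd:
  assumes sg: "simple_graph V E" and fv: "free_vertex V E v" and K: "maximal_clique V E K"
    and vK: "v \<in> K" and e: "E v u"
  shows "u \<in> K"
proof -
  have fin: "finite V" using sg unfolding simple_graph_def by auto
  have uv: "u \<in> V" "v \<in> V" using e sg unfolding simple_graph_def by auto
  have "u \<noteq> v" using e irr_E[OF sg, of v] by auto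
  then have "clique V E {v, u}" unfolding clique_def using uv e sym_E[OF sg e] by auto
  then obtain K' where K': "maximal_clique V E K'" "{v, u} \<subseteq> K'" using clique_extend[OF fin] by blast
  have "K' = K" using fv K' K vK unfolding free_vertex_def by auto
  then show ?thesis using K' by auto
qed



lemma dom_outside:
  assumes sg: "simple_graph V E" and ch: "chordal V E" and Pc: "clique V E P"
    and out: "\<forall>p\<in>P. \<exists>a. a \<notin> P \<and> E p a"
  shows "\<exists>A. A \<inter> P = {} \<and> independent_set V E A \<and> (\<forall>p\<in>P. \<exists>a\<in>A. E p a)"
proof -
  have fin: "finite V" using sg unfolding simple_graph_def by auto
  have PV: "P \<subseteq> V" using Pc unfolding clique_def by auto
  have finP: "finite P" using finite_subset[OF PV fin] .
  define Ou where "Ou = V - P"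
  define n where "n a = {p\<in>P. E a p}" for a
  have nP: "n a \<subseteq> P" for a unfolding n_def by auto
  have comp: "n a \<subseteq> n b \<or> n b \<subseteq> n a" if ab: "a \<in> Ou" "b \<in> Ou" "E a b" for a b
  proof (rule ccontr)
    assume "\<not> (n a \<subseteq> n b \<or> n b \<subseteq> n a)"
    then obtain p q where pq: "p \<in> n a" "p \<notin> n b" "q \<in> n b" "q \<notin> n a" by auto
    have pP: "p \<in> P" "q \<in> P" using pq unfolding n_def by auto
    have e: "E a p" "\<not> E a q" "E b q" "\<not> E b p" using pq pP unfolding n_def by auto
    have "a \<in> V" "b \<in> V" "a \<notin> P" "b \<notin> P" using ab unfolding Ou_def by auto
    then show False using four_cycle[OF sg ch Pc pP \<open>a \<in> V\<close> \<open>b \<in> V\<close> \<open>a \<notin> P\<close> \<open>b \<notin> P\<close> ab(3) e] by auto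
  qed
  define M where "M = {a\<in>Ou. \<forall>b\<in>Ou. n a \<subseteq> n b \<longrightarrow> n a = n b}"
  have MO: "M \<subseteq> Ou" unfolding M_def by auto
  have upM: "\<exists>b\<in>M. n a \<subseteq> n b" if aO: "a \<in> Ou" for a
  proof -
    define R where "R b \<longleftrightarrow> b \<in> Ou \<and> n a \<subseteq> n b" for b
    have "R a" using aO unfolding R_def by auto
    then obtain b where Rb: "R b" and m: "\<And>c. R c \<Longrightarrow> card P - card (n b) \<le> card P - card (n c)"
      using ex_has_least_nat[of R a "\<lambda>b. card P - card (n b)"] by metis
    have "b \<in> M" unfolding M_def
    proof (intro CollectI conjI ballI impI)
      show "b \<in> Ou" using Rb unfolding R_def by auto
      fix c assume c: "c \<in> Ou" "n b \<subseteq> n c"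
      then have "R c" using Rb unfolding R_def by auto
      then have "card P - card (n b) \<le> card P - card (n c)" by (rule m)
      moreover have "card (n c) \<le> card P" using card_mono[OF finP nP] .
      moreover have "card (n b) \<le> card (n c)" using card_mono[OF finite_subset[OF nP finP] c(2)] .
      ultimately have "card (n b) = card (n c)" by linarith
      then show "n b = n c" using card_subset_eq[OF finite_subset[OF nP finP] c(2)] by auto
    qed
    then show ?thesis using Rb unfolding R_def by auto
  qed
  define Q where "Q A \<longleftrightarrow> A \<subseteq> M \<and> (\<forall>x\<in>A. \<forall>y\<in>A. \<not> E x y)" for A
  have "Q {}" unfolding Q_def by auto
  moreover have "\<And>S. Q S \<Longrightarrow> S \<subseteq> V" unfolding Q_def M_def Ou_def by auto
  ultimately obtain A where QA: "Q A" and mx: "\<forall>T. A \<subset> T \<longrightarrow> \<not> Q T"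
    using max_extend[OF fin, of Q "{}"] by auto
  have AM: "A \<subseteq> M" and iA: "\<forall>x\<in>A. \<forall>y\<in>A. \<not> E x y" using QA unfolding Q_def by auto
  have adj: "\<exists>a'\<in>A. E b a'" if bM: "b \<in> M" and bA: "b \<notin> A" for b
  proof (rule ccontr)
    assume na: "\<not> (\<exists>a'\<in>A. E b a')"
    have "Q (insert b A)" unfolding Q_def
    proof (intro conjI ballI)
      show "insert b A \<subseteq> M" using bM AM by auto
      fix x y assume xy: "x \<in> insert b A" "y \<in> insert b A"
      show "\<not> E x y"
      proof (cases "x = b")
        case True
        then show ?thesis using xy na irr_E[OF sg, of b] by auto
      next
        case False
        then have xA: "x \<in> A" using xy by auto
        show ?thesis
        proof (cases "y = b")
          case True
          then show ?thesis using xA na sym_E[OF sg, of x b] by auto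
        next
          case False
          then show ?thesis using xA xy iA by auto
        qed
      qed
    qed
    moreover have "A \<subset> insert b A" using bA by auto
    ultimately show False using mx by auto
  qed
  have domA: "\<exists>a\<in>A. E p a" if pP: "p \<in> P" for p
  proof -
    obtain a where a: "a \<notin> P" "E p a" using out pP by auto
    have "a \<in> V" using a(2) sg unfolding simple_graph_def by auto
    then have aO: "a \<in> Ou" using a(1) unfolding Ou_def by auto
    have "p \<in> n a" using pP sym_E[OF sg a(2)] unfolding n_def by auto
    obtain b where bM: "b \<in> M" and nab: "n a \<subseteq> n b" using upM[OF aO] by auto
    have pb: "p \<in> n b" using nab \<open>p \<in> n a\<close> by auto
    show ?thesis
    proof (cases "b \<in> A")
      case True
      then show ?thesis using pb sym_E[OF sg, of b p] unfolding n_def by auto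
    next
      case False
      then obtain a' where a': "a' \<in> A" "E b a'" using adj[OF bM] by auto
      have a'M: "a' \<in> M" using a' AM by auto
      have "b \<in> Ou" "a' \<in> Ou" using bM a'M MO by auto
      then have "n b \<subseteq> n a' \<or> n a' \<subseteq> n b" using comp a'(2) by auto
      moreover have "n b \<subseteq> n a' \<Longrightarrow> n b = n a'" using bM \<open>a' \<in> Ou\<close> unfolding M_def by auto
      moreover have "n a' \<subseteq> n b \<Longrightarrow> n a' = n b" using a'M \<open>b \<in> Ou\<close> unfolding M_def by auto
      ultimately have "n a' = n b" by auto
      then have "p \<in> n a'" using pb by auto
      then show ?thesis using a'(1) sym_E[OF sg, of a' p] unfolding n_def by auto
    qed
  qed
  show ?thesis
  proof (intro exI conjI)
    show "A \<inter> P = {}" using AM MO unfolding Ou_def by auto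
    show "independent_set V E A" unfolding independent_set_def using AM MO iA unfolding Ou_def by auto
    show "\<forall>p\<in>P. \<exists>a\<in>A. E p a" using domA by auto
  qed
qed



definition iv :: "'a set \<Rightarrow> ('a \<Rightarrow> 'a \<Rightarrow> bool) \<Rightarrow> 'a set set \<Rightarrow> bool" where
  "iv V E \<K> \<longleftrightarrow> (\<forall>K\<in>\<K>. maximal_clique V E K \<and> (\<exists>v\<in>K. free_vertex V E v))
     \<and> (\<forall>K1\<in>\<K>. \<forall>K2\<in>\<K>. K1 \<noteq> K2 \<longrightarrow> K1 \<inter> K2 = {}) \<and> \<Union>\<K> = V"

lemma count_indep:
  assumes fin: "finite \<P>" and cl: "\<forall>P\<in>\<P>. clique V E P"
    and dis: "\<forall>P1\<in>\<P>. \<forall>P2\<in>\<P>. P1 \<noteq> P2 \<longrightarrow> P1 \<inter> P2 = {}" and un: "\<Union>\<P> = V"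
    and iS: "independent_set V E S"
  shows "card S \<le> card {K\<in>\<P>. K \<inter> S \<noteq> {}}"
proof -
  define g where "g x = (SOME K. K \<in> \<P> \<and> x \<in> K)" for x
  have g: "g x \<in> \<P> \<and> x \<in> g x" if "x \<in> S" for x
  proof -
    have "x \<in> V" using that iS unfolding independent_set_def by auto
    then have "\<exists>K. K \<in> \<P> \<and> x \<in> K" using un by auto
    then show ?thesis unfolding g_def by (rule someI_ex)
  qed
  have "inj_on g S"
  proof (rule inj_onI)
    fix x y assume xy: "x \<in> S" "y \<in> S" "g x = g y"
    show "x = y"
    proof (rule ccontr)
      assume "x \<noteq> y"
      moreover have "x \<in> g x" "y \<in> g x" "g x \<in> \<P>" using g xy by auto
      ultimately have "E x y" using cl unfolding clique_def by auto
      then show False using xy iS unfolding independent_set_def by auto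
    qed
  qed
  moreover have "g ` S \<subseteq> {K\<in>\<P>. K \<inter> S \<noteq> {}}" using g by auto
  moreover have "finite {K\<in>\<P>. K \<inter> S \<noteq> {}}" using fin by auto
  ultimately show ?thesis by (rule card_inj_on_le)
qed

lemma wc_iv:
  assumes sg: "simple_graph V E" and ch: "chordal V E" and wc: "well_covered V E"
  shows "\<exists>\<K>. iv V E \<K>"
proof -
  have fin: "finite V" using sg unfolding simple_graph_def by auto
  obtain \<P> I where P: "finite \<P>" "\<forall>P\<in>\<P>. clique V E P"
    "\<forall>P1\<in>\<P>. \<forall>P2\<in>\<P>. P1 \<noteq> P2 \<longrightarrow> P1 \<inter> P2 = {}" "\<Union>\<P> = V"
    "independent_set V E I" "card I = card \<P>"
    using clique_partition[OF sg ch] by metis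
  obtain Is where Is: "maximal_independent_set V E Is" "I \<subseteq> Is" using indep_extend[OF fin P(5)] by auto
  have "Is \<subseteq> V" using Is(1) unfolding maximal_independent_set_def independent_set_def by auto
  then have "card I \<le> card Is" using card_mono[OF finite_subset[OF _ fin] Is(2)] by auto
  then have cIs: "card \<P> \<le> card Is" using P(6) by simp
  have key: "\<exists>w\<in>P. \<forall>u. E w u \<longrightarrow> u \<in> P" if PP: "P \<in> \<P>" for P
  proof (rule ccontr)
    assume "\<not> (\<exists>w\<in>P. \<forall>u. E w u \<longrightarrow> u \<in> P)"
    then have out: "\<forall>p\<in>P. \<exists>a. a \<notin> P \<and> E p a" by auto
    have Pc: "clique V E P" using P(2) PP by auto
    obtain A where A: "A \<inter> P = {}" "independent_set V E A" "\<forall>p\<in>P. \<exists>a\<in>A. E p a"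
      using dom_outside[OF sg ch Pc out] by auto
    obtain J where J: "maximal_independent_set V E J" "A \<subseteq> J" using indep_extend[OF fin A(2)] by auto
    have iJ: "independent_set V E J" using J(1) unfolding maximal_independent_set_def by auto
    have JP: "J \<inter> P = {}"
    proof (rule ccontr)
      assume "J \<inter> P \<noteq> {}"
      then obtain x where x: "x \<in> J" "x \<in> P" by auto
      then obtain a where "a \<in> A" "E x a" using A(3) by auto
      then show False using x J(2) iJ unfolding independent_set_def by auto
    qed
    have "card J \<le> card {K\<in>\<P>. K \<inter> J \<noteq> {}}" using count_indep[OF P(1-4) iJ] .
    also have "\<dots> \<le> card (\<P> - {P})"
      by (rule card_mono) (use P(1) JP in auto)
    also have "\<dots> < card \<P>"
      by (rule card_Diff1_less[OF P(1) PP])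
    finally have "card J < card Is" using cIs by linarith
    moreover have "card J = card Is" using wc[unfolded well_covered_def, rule_format, OF J(1) Is(1)] .
    ultimately show False by simp
  qed
  have "iv V E \<P>" unfolding iv_def
  proof (intro conjI)
   show "\<forall>P\<in>\<P>. maximal_clique V E P \<and> (\<exists>v\<in>P. free_vertex V E v)"
   proof (intro ballI conjI)
    fix P assume PP: "P \<in> \<P>"
    obtain w where w: "w \<in> P" "\<forall>u. E w u \<longrightarrow> u \<in> P" using key[OF PP] by auto
    have Pc: "clique V E P" using P(2) PP by auto
    have mc: "maximal_clique V E P" unfolding maximal_clique_def
    proof (intro conjI allI impI)
      show "clique V E P" by (rule Pc)
      fix K' assume PK: "P \<subset> K'"
      show "\<not> clique V E K'"
      proof
        assume cK: "clique V E K'"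
        obtain x where x: "x \<in> K'" "x \<notin> P" using PK by auto
        have "w \<in> K'" using w PK by auto
        moreover have "x \<noteq> w" using x w by auto
        ultimately have "E w x" using cK x unfolding clique_def by auto
        then show False using w x by auto
      qed
    qed
    show "maximal_clique V E P" by (rule mc)
    have wV: "w \<in> V" using Pc w unfolding clique_def by auto
    have uniq: "K = P" if K: "maximal_clique V E K" "w \<in> K" for K
    proof -
      have KP: "K \<subseteq> P"
      proof
        fix y assume yK: "y \<in> K"
        show "y \<in> P"
        proof (cases "y = w")
          case True then show ?thesis using w by auto
        next
          case False
          then have "E w y" using K yK unfolding maximal_clique_def clique_def by auto
          then show ?thesis using w by auto
        qed
      qed
      show ?thesis
      proof (rule ccontr)
        assume "K \<noteq> P"
        then have "K \<subset> P" using KP by auto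
        then show False using K(1) Pc unfolding maximal_clique_def by auto
      qed
    qed
    have "free_vertex V E w" unfolding free_vertex_def
    proof (intro conjI)
      show "w \<in> V" by (rule wV)
      show "\<exists>!K. maximal_clique V E K \<and> w \<in> K"
      proof (rule ex1I[of _ P])
        show "maximal_clique V E P \<and> w \<in> P" using mc w by auto
        fix K assume "maximal_clique V E K \<and> w \<in> K"
        then show "K = P" using uniq by auto
      qed
    qed
    then show "\<exists>v\<in>P. free_vertex V E v" using w by auto
   qed
    show "\<forall>K1\<in>\<P>. \<forall>K2\<in>\<P>. K1 \<noteq> K2 \<longrightarrow> K1 \<inter> K2 = {}" using P(3) .
    show "\<Union>\<P> = V" using P(4) .
  qed
  then show ?thesis by auto
qed



lemma iv_facts:
  assumes sg: "simple_graph V E" and K: "iv V E \<K>"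
  shows "domination_number V E = card \<K>" "independence_number V E = card \<K>"
    "well_dominated V E"
proof -
  have fin: "finite V" using sg unfolding simple_graph_def by auto
  have mc: "\<And>K. K \<in> \<K> \<Longrightarrow> maximal_clique V E K" and fr: "\<forall>K\<in>\<K>. \<exists>v\<in>K. free_vertex V E v"
    and dis: "\<forall>K1\<in>\<K>. \<forall>K2\<in>\<K>. K1 \<noteq> K2 \<longrightarrow> K1 \<inter> K2 = {}" and un: "\<Union>\<K> = V"
    using K unfolding iv_def by auto
  have cl: "\<forall>K\<in>\<K>. clique V E K" using mc unfolding maximal_clique_def by auto
  have KV: "K \<subseteq> V" if "K \<in> \<K>" for K using cl that unfolding clique_def by auto
  have finK: "finite \<K>"
  proof (rule finite_subset[of _ "Pow V"])
    show "\<K> \<subseteq> Pow V" using KV by auto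
    show "finite (Pow V)" using fin by auto
  qed
  have "\<forall>K\<in>\<K>. \<exists>v. v \<in> K \<and> (\<forall>u. E v u \<longrightarrow> u \<in> K)"
  proof
    fix K assume KK: "K \<in> \<K>"
    obtain v where v: "v \<in> K" "free_vertex V E v" using fr KK by auto
    show "\<exists>v. v \<in> K \<and> (\<forall>u. E v u \<longrightarrow> u \<in> K)"
      using free_nbhd[OF sg v(2) mc[OF KK] v(1)] v(1) by auto
  qed
  then obtain r where r: "\<And>K. K \<in> \<K> \<Longrightarrow> r K \<in> K" "\<And>K u. K \<in> \<K> \<Longrightarrow> E (r K) u \<Longrightarrow> u \<in> K"
    by metis
  have inK: "\<exists>K\<in>\<K>. x \<in> K" if "x \<in> V" for x using un that by auto
  have same: "K1 = K2" if "K1 \<in> \<K>" "K2 \<in> \<K>" "x \<in> K1" "x \<in> K2" for K1 K2 x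
    using dis that by auto
  have adjK: "E x y" if "K \<in> \<K>" "x \<in> K" "y \<in> K" "x \<noteq> y" for K x y
    using cl that unfolding clique_def by auto
  have meets: "\<exists>x\<in>D. x \<in> K" if dD: "dominating_set V E D" and KK: "K \<in> \<K>" for D K
  proof -
    have "r K \<in> V" using r(1)[OF KK] KV[OF KK] by auto
    then have "r K \<in> D \<or> (\<exists>u\<in>D. E (r K) u)" using dD unfolding dominating_set_def by auto
    then show ?thesis using r[OF KK] by auto
  qed
  have lower: "card \<K> \<le> card D" if dD: "dominating_set V E D" for D
  proof -
    define f where "f K = (SOME x. x \<in> D \<and> x \<in> K)" for K
    have f: "f K \<in> D \<and> f K \<in> K" if "K \<in> \<K>" for K
      unfolding f_def using meets[OF dD that] by (metis (mono_tags, lifting) someI_ex)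
    have "inj_on f \<K>"
    proof (rule inj_onI)
      fix K1 K2 assume "K1 \<in> \<K>" "K2 \<in> \<K>" "f K1 = f K2"
      then show "K1 = K2" using f[of K1] f[of K2] same[of K1 K2 "f K1"] by auto
    qed
    moreover have "f ` \<K> \<subseteq> D" using f by auto
    moreover have "finite D" using dD finite_subset[OF _ fin] unfolding dominating_set_def by auto
    ultimately show ?thesis by (rule card_inj_on_le)
  qed
  define F where "F = r ` \<K>"
  have injr: "inj_on r \<K>"
  proof (rule inj_onI)
    fix K1 K2 assume "K1 \<in> \<K>" "K2 \<in> \<K>" "r K1 = r K2"
    then show "K1 = K2" using r(1)[of K1] r(1)[of K2] same[of K1 K2 "r K1"] by auto
  qed
  have cF: "card F = card \<K>" unfolding F_def using card_image[OF injr] .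
  have FV: "F \<subseteq> V" unfolding F_def using r(1) KV by auto
  have iF: "independent_set V E F" unfolding independent_set_def
  proof (intro conjI ballI)
    show "F \<subseteq> V" by (rule FV)
    fix x y assume "x \<in> F" "y \<in> F"
    then obtain K1 K2 where K12: "K1 \<in> \<K>" "K2 \<in> \<K>" "x = r K1" "y = r K2" unfolding F_def by auto
    show "\<not> E x y"
    proof
      assume e: "E x y"
      then have "y \<in> K1" using r(2)[OF K12(1)] K12 by auto
      then have "K1 = K2" using same[OF K12(1,2)] r(1)[OF K12(2)] K12 by auto
      then have "x = y" using K12 by auto
      then show False using e irr_E[OF sg] by auto
    qed
  qed
  have dF: "dominating_set V E F" unfolding dominating_set_def
  proof (intro conjI ballI)
    show "F \<subseteq> V" by (rule FV)
    fix u assume uV: "u \<in> V"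
    obtain K where KK: "K \<in> \<K>" "u \<in> K" using inK[OF uV] by auto
    show "u \<in> F \<or> (\<exists>v\<in>F. E u v)"
    proof (cases "u = r K")
      case True then show ?thesis using KK unfolding F_def by auto
    next
      case False
      then have "E u (r K)" using adjK[OF KK(1) KK(2) r(1)[OF KK(1)]] by auto
      then show ?thesis using KK unfolding F_def by auto
    qed
  qed
  have upper: "card S \<le> card \<K>" if iS: "independent_set V E S" for S
  proof -
    have "card S \<le> card {K\<in>\<K>. K \<inter> S \<noteq> {}}" using count_indep[OF finK cl dis un iS] .
    also have "\<dots> \<le> card \<K>" by (rule card_mono[OF finK]) auto
    finally show ?thesis .
  qed
  have finD: "finite {D. dominating_set V E D}"
    by (rule finite_subset[of _ "Pow V"]) (use fin in \<open>auto simp: dominating_set_def\<close>)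
  have finI: "finite {S. independent_set V E S}"
    by (rule finite_subset[of _ "Pow V"]) (use fin in \<open>auto simp: independent_set_def\<close>)
  show "domination_number V E = card \<K>" unfolding domination_number_def
  proof (rule Min_eqI)
    show "finite (card ` {D. dominating_set V E D})" using finD by auto
    fix y assume "y \<in> card ` {D. dominating_set V E D}"
    then show "card \<K> \<le> y" using lower by auto
  next
    show "card \<K> \<in> card ` {D. dominating_set V E D}" using dF cF by force
  qed
  show "independence_number V E = card \<K>" unfolding independence_number_def
  proof (rule Max_eqI)
    show "finite (card ` {S. independent_set V E S})" using finI by auto
    fix y assume "y \<in> card ` {S. independent_set V E S}"
    then show "y \<le> card \<K>" using upper by auto
  next
    show "card \<K> \<in> card ` {S. independent_set V E S}" using iF cF by force
  qed
  have mds: "card D = card \<K>" if mD: "minimal_dominating_set V E D" for D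
  proof -
    have dD: "dominating_set V E D" using mD unfolding minimal_dominating_set_def by auto
    have DV: "D \<subseteq> V" using dD unfolding dominating_set_def by auto
    have priv: False if xy: "x \<in> D" "y \<in> D" "x \<noteq> y" "K \<in> \<K>" "x \<in> K" "y \<in> K" for x y K
    proof -
      have "D - {x} \<subset> D" using xy by auto
      then have "\<not> dominating_set V E (D - {x})" using mD unfolding minimal_dominating_set_def by auto
      moreover have "D - {x} \<subseteq> V" using DV by auto
      ultimately obtain p where p: "p \<in> V" "p \<notin> D - {x}" "\<forall>u\<in>D - {x}. \<not> E p u"
        unfolding dominating_set_def by auto
      have yD: "y \<in> D - {x}" using xy by auto
      show False
      proof (cases "p = x")
        case True
        then have "E p y" using adjK[OF xy(4) xy(5) xy(6) xy(3)] by auto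
        then show False using p(3) yD by auto
      next
        case False
        then have pD: "p \<notin> D" using p(2) by auto
        then obtain u where u: "u \<in> D" "E p u" using dD p(1) unfolding dominating_set_def by auto
        then have "u = x" using p(3) by auto
        obtain K' where K': "K' \<in> \<K>" "p \<in> K'" using inK[OF p(1)] by auto
        show False
        proof (cases "K' = K")
          case True
          have "p \<noteq> y" using pD xy by auto
          then have "E p y" using adjK[OF xy(4) _ xy(6)] K' True by auto
          then show False using p(3) yD by auto
        next
          case False
          obtain z where z: "z \<in> D" "z \<in> K'" using meets[OF dD K'(1)] by auto
          have "x \<notin> K'" using same[OF xy(4) K'(1) xy(5)] False by auto
          then have "z \<noteq> x" using z by auto
          moreover have "z \<noteq> p" using z pD by auto
          ultimately have "E p z" using adjK[OF K'(1) K'(2) z(2)] by auto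
          then show False using p(3) z \<open>z \<noteq> x\<close> by auto
        qed
      qed
    qed
    define g where "g x = (SOME K. K \<in> \<K> \<and> x \<in> K)" for x
    have g: "g x \<in> \<K> \<and> x \<in> g x" if "x \<in> D" for x
    proof -
      have "\<exists>K. K \<in> \<K> \<and> x \<in> K" using inK DV that by auto
      then show ?thesis unfolding g_def by (rule someI_ex)
    qed
    have "inj_on g D"
    proof (rule inj_onI)
      fix x y assume xy: "x \<in> D" "y \<in> D" "g x = g y"
      show "x = y"
      proof (rule ccontr)
        assume "x \<noteq> y"
        then show False using priv[of x y "g x"] g xy by auto
      qed
    qed
    moreover have "g ` D \<subseteq> \<K>" using g by auto
    ultimately have "card D \<le> card \<K>" using finK by (rule card_inj_on_le)
    then show ?thesis using lower[OF dD] by auto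
  qed
  show "well_dominated V E" unfolding well_dominated_def using mds by auto
qed

lemma gamma_le_mis:
  assumes sg: "simple_graph V E" and S: "maximal_independent_set V E S"
  shows "domination_number V E \<le> card S \<and> card S \<le> independence_number V E"
proof -
  have fin: "finite V" using sg unfolding simple_graph_def by auto
  have finD: "finite {D. dominating_set V E D}"
    by (rule finite_subset[of _ "Pow V"]) (use fin in \<open>auto simp: dominating_set_def\<close>)
  have finI: "finite {S. independent_set V E S}"
    by (rule finite_subset[of _ "Pow V"]) (use fin in \<open>auto simp: independent_set_def\<close>)
  have "dominating_set V E S" by (rule mis_dom[OF sg S])
  then have "card S \<in> card ` {D. dominating_set V E D}" by auto
  then have 1: "domination_number V E \<le> card S" unfolding domination_number_def
    using finD by (intro Min_le) auto
  have "independent_set V E S" using S unfolding maximal_independent_set_def by auto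
  then have "card S \<in> card ` {S. independent_set V E S}" by auto
  then have 2: "card S \<le> independence_number V E" unfolding independence_number_def
    using finI by (intro Max_ge) auto
  show ?thesis using 1 2 by auto
qed

theorem corollary4p8:
  fixes V :: "'a set" and E :: "'a \<Rightarrow> 'a \<Rightarrow> bool"
  assumes "simple_graph V E" and "chordal V E"
  shows "(domination_number V E = independence_number V E \<longleftrightarrow> well_covered V E)
       \<and> (well_covered V E \<longleftrightarrow> well_dominated V E)
       \<and> (well_dominated V E \<longleftrightarrow>
            (\<exists>\<K>. (\<forall>K\<in>\<K>. maximal_clique V E K \<and> (\<exists>v\<in>K. free_vertex V E v))
                 \<and> (\<forall>K1\<in>\<K>. \<forall>K2\<in>\<K>. K1 \<noteq> K2 \<longrightarrow> K1 \<inter> K2 = {})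
                 \<and> \<Union>\<K> = V))"
proof -
  note sg = assms(1) and ch = assms(2)
  have ivE: "(\<exists>\<K>. (\<forall>K\<in>\<K>. maximal_clique V E K \<and> (\<exists>v\<in>K. free_vertex V E v))
                 \<and> (\<forall>K1\<in>\<K>. \<forall>K2\<in>\<K>. K1 \<noteq> K2 \<longrightarrow> K1 \<inter> K2 = {})
                 \<and> \<Union>\<K> = V) \<longleftrightarrow> (\<exists>\<K>. iv V E \<K>)" unfolding iv_def by simp
  have wc_iv': "well_covered V E \<Longrightarrow> \<exists>\<K>. iv V E \<K>" using wc_iv[OF sg ch] by auto
  have iv_wd: "\<exists>\<K>. iv V E \<K> \<Longrightarrow> well_dominated V E" using iv_facts(3)[OF sg] by auto
  have iv_ga: "\<exists>\<K>. iv V E \<K> \<Longrightarrow> domination_number V E = independence_number V E"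
    using iv_facts(1,2)[OF sg] by metis
  have wd_wc: "well_covered V E" if wd: "well_dominated V E"
    unfolding well_covered_def
  proof (intro allI impI)
    fix S1 S2 assume "maximal_independent_set V E S1" "maximal_independent_set V E S2"
    then have "minimal_dominating_set V E S1" "minimal_dominating_set V E S2"
      using mis_mds[OF sg] by auto
    then show "card S1 = card S2" by (rule wd[unfolded well_dominated_def, rule_format])
  qed
  have ga_wc: "well_covered V E" if ga: "domination_number V E = independence_number V E"
    unfolding well_covered_def
  proof (intro allI impI)
    fix S1 S2 assume "maximal_independent_set V E S1" "maximal_independent_set V E S2"
    then have "domination_number V E \<le> card S1 \<and> card S1 \<le> independence_number V E"
      "domination_number V E \<le> card S2 \<and> card S2 \<le> independence_number V E"
      using gamma_le_mis[OF sg] by auto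
    then show "card S1 = card S2" using ga by linarith
  qed
  show ?thesis unfolding ivE using wc_iv' iv_wd iv_ga wd_wc ga_wc by blast
qed


end
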